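(* Consider the spot market described in the context, with fixed leader productions $\mathbf x\in\mathbb{R}_+^M$, and suppose $f_j=f$ for every follower $j$. Then the spot market has a unique Nash equilibrium, given for every follower $j$ by \[y_j=\Big[\frac1{N+1}\Big(\alpha_y+f-\sum_{i=1}^Mx_i\Big)\Big]_0^k.\]
   Context: Model: $M\ge1$ leaders, $N\ge2$ followers; inverse demand $P(q)=\alpha-\beta q$, $\alpha,\beta>0$; follower marginal cost $c>0$; each follower has capacity $k>0$. Given leader productions $x_1,\dots,x_M\ge0$ and follower forward positions $f_1,\dots,f_N\in\mathbb{R}$, the spot market is the game among the $N$ followers in which follower $j$ chooses $y_j\in[0,k]$ to maximize $P(\sum_i x_i+\sum_{j'}y_{j'})(y_j-f_j)-cy_j$. Normalized follower demand: $\alpha_y=(\alpha-c)/\beta$. For $a\le b$, $[z]_a^b=\min(\max(z,a),b)$. *)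

theory Defs
  imports Complex_Main
begin

text \<open>Clipping [z]_a^b = min(max(z,a),b).\<close>
definition clip :: "real \<Rightarrow> real \<Rightarrow> real \<Rightarrow> real" where
  "clip a b z = min (max z a) b"

text \<open>Payoff of follower j in the spot market: leaders 0..M-1 produce x i,
  followers 0..N-1 produce y j', forward positions fw j, inverse demand
  P(q) = alpha - beta q, marginal cost c.\<close>
definition follower_payoff ::
  "real \<Rightarrow> real \<Rightarrow> real \<Rightarrow> nat \<Rightarrow> nat \<Rightarrow> (nat \<Rightarrow> real) \<Rightarrow> (nat \<Rightarrow> real) \<Rightarrow> (nat \<Rightarrow> real) \<Rightarrow> nat \<Rightarrow> real" where
  "follower_payoff \<alpha> \<beta> c M N x fw y j =
     (\<alpha> - \<beta> * ((\<Sum>i<M. x i) + (\<Sum>j'<N. y j'))) * (y j - fw j) - c * y j"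

definition spot_NE ::
  "real \<Rightarrow> real \<Rightarrow> real \<Rightarrow> real \<Rightarrow> nat \<Rightarrow> nat \<Rightarrow> (nat \<Rightarrow> real) \<Rightarrow> (nat \<Rightarrow> real) \<Rightarrow> (nat \<Rightarrow> real) \<Rightarrow> bool" where
  "spot_NE \<alpha> \<beta> c k M N x fw y \<longleftrightarrow>
     (\<forall>j<N. 0 \<le> y j \<and> y j \<le> k) \<and>
     (\<forall>j<N. \<forall>z. 0 \<le> z \<and> z \<le> k \<longrightarrow>
        follower_payoff \<alpha> \<beta> c M N x fw (y(j := z)) j \<le> follower_payoff \<alpha> \<beta> c M N x fw y j)"

end

theory Submission
  imports Defs
begin

lemma quad_id:
  fixes R \<beta> f c z z0 :: real
  shows "((R - \<beta>*z)*(z-f) - c*z) - ((R - \<beta>*z0)*(z0-f) - c*z0)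
     = (z - z0) * ((R + \<beta>*f - c - 2*\<beta>*z0) - \<beta>*(z - z0))"
  by (simp add: algebra_simps power2_eq_square)

lemma quad_max:
  fixes R \<beta> f c k z0 :: real
  assumes b: "\<beta> > 0" and z0: "0 \<le> z0" "z0 \<le> k"
  defines "D \<equiv> R + \<beta>*f - c - 2*\<beta>*z0"
  shows "(\<forall>z. 0 \<le> z \<and> z \<le> k \<longrightarrow> (R - \<beta>*z)*(z-f) - c*z \<le> (R - \<beta>*z0)*(z0-f) - c*z0)
     \<longleftrightarrow> ((z0 > 0 \<longrightarrow> D \<ge> 0) \<and> (z0 < k \<longrightarrow> D \<le> 0))"
proof
  assume H: "\<forall>z. 0 \<le> z \<and> z \<le> k \<longrightarrow> (R - \<beta>*z)*(z-f) - c*z \<le> (R - \<beta>*z0)*(z0-f) - c*z0"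
  have Hd: "(z - z0) * (D - \<beta>*(z - z0)) \<le> 0" if "0 \<le> z" "z \<le> k" for z
    using H that quad_id[of R \<beta> z f c z0] unfolding D_def by force
  show "(z0 > 0 \<longrightarrow> D \<ge> 0) \<and> (z0 < k \<longrightarrow> D \<le> 0)"
  proof safe
    assume p: "z0 > 0"
    show "D \<ge> 0"
    proof (rule ccontr)
      assume "\<not> D \<ge> 0" hence Dn: "D < 0" by simp
      define e where "e = min z0 (-D/\<beta>) / 2"
      have e0: "e > 0" using p Dn b by (simp add: e_def field_simps)
      have "e \<le> (-D/\<beta>)/2" unfolding e_def by simp
      hence "\<beta>*e \<le> -D/2" using b by (simp add: field_simps)
      hence n: "D + \<beta>*e < 0" using Dn by linarith
      have "e \<le> z0" unfolding e_def using p Dn b by simp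
      hence "(z0 - e - z0) * (D - \<beta>*(z0 - e - z0)) \<le> 0" using Hd[of "z0 - e"] e0 z0 by simp
      moreover have "(z0 - e - z0) * (D - \<beta>*(z0 - e - z0)) = e * (-(D + \<beta>*e))"
        by (simp add: algebra_simps)
      moreover have "e * (-(D + \<beta>*e)) > 0" using e0 n by simp
      ultimately show False by linarith
    qed
  next
    assume p: "z0 < k"
    show "D \<le> 0"
    proof (rule ccontr)
      assume "\<not> D \<le> 0" hence Dn: "D > 0" by simp
      define e where "e = min (k - z0) (D/\<beta>) / 2"
      have e0: "e > 0" using p Dn b by (simp add: e_def field_simps)
      have "e \<le> (D/\<beta>)/2" unfolding e_def by simp
      hence "\<beta>*e \<le> D/2" using b by (simp add: field_simps)
      hence n: "D - \<beta>*e > 0" using Dn by linarith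
      have "e \<le> k - z0" unfolding e_def using p Dn b by simp
      hence "(z0 + e - z0) * (D - \<beta>*(z0 + e - z0)) \<le> 0" using Hd[of "z0 + e"] e0 z0 by simp
      moreover have "(z0 + e - z0) * (D - \<beta>*(z0 + e - z0)) = e * (D - \<beta>*e)"
        by (simp add: algebra_simps)
      moreover have "e * (D - \<beta>*e) > 0" using e0 n by simp
      ultimately show False by linarith
    qed
  qed
next
  assume C: "(z0 > 0 \<longrightarrow> D \<ge> 0) \<and> (z0 < k \<longrightarrow> D \<le> 0)"
  show "\<forall>z. 0 \<le> z \<and> z \<le> k \<longrightarrow> (R - \<beta>*z)*(z-f) - c*z \<le> (R - \<beta>*z0)*(z0-f) - c*z0"
  proof safe
    fix z assume z: "0 \<le> z" "z \<le> k"
    have "(z - z0) * (D - \<beta>*(z - z0)) \<le> 0"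
    proof (cases "z \<ge> z0")
      case True
      show ?thesis
      proof (cases "z = z0")
        case False
        hence "z0 < k" using True z by linarith
        hence "D \<le> 0" using C by simp
        moreover have "\<beta>*(z - z0) \<ge> 0" using True b by simp
        ultimately have "D - \<beta>*(z - z0) \<le> 0" by linarith
        thus ?thesis using True by (simp add: mult_nonneg_nonpos)
      qed simp
    next
      case False
      hence "z0 > 0" using z by linarith
      hence "D \<ge> 0" using C by simp
      hence "D - \<beta>*(z - z0) \<ge> 0" using False b
        by (smt (verit) mult_pos_neg)
      thus ?thesis using False by (simp add: mult_nonpos_nonneg)
    qed
    thus "(R - \<beta>*z)*(z-f) - c*z \<le> (R - \<beta>*z0)*(z0-f) - c*z0"
      using quad_id[of R \<beta> z f c z0] unfolding D_def by linarith
  qed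
qed

lemma sum_upd:
  fixes y :: "nat \<Rightarrow> real"
  assumes "j < N"
  shows "(\<Sum>j'<N. (y(j := z)) j') = (\<Sum>j'<N. y j') - y j + z"
proof -
  have "(\<Sum>j'<N. (y(j := z)) j') = (y(j:=z)) j + (\<Sum>j'\<in>{..<N}-{j}. (y(j := z)) j')"
    using assms by (simp add: sum.remove)
  also have "(\<Sum>j'\<in>{..<N}-{j}. (y(j := z)) j') = (\<Sum>j'\<in>{..<N}-{j}. y j')"
    by (rule sum.cong) auto
  also have "(\<Sum>j'<N. y j') = y j + (\<Sum>j'\<in>{..<N}-{j}. y j')"
    using assms by (simp add: sum.remove)
  ultimately show ?thesis by simp
qed

lemma clip_char:
  fixes k t v :: real
  assumes "k > 0"
  shows "(0 \<le> t \<and> t \<le> k \<and> (t > 0 \<longrightarrow> t \<le> v) \<and> (t < k \<longrightarrow> t \<ge> v)) \<longleftrightarrow> t = clip 0 k v"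
  using assms unfolding clip_def by (auto simp: min_def max_def)

lemma fix_char:
  fixes k t A n :: real
  assumes "k > 0" "n \<ge> 0"
  shows "t = clip 0 k (A - n*t) \<longleftrightarrow> t = clip 0 k (A/(n+1))"
proof -
  have np: "n + 1 > 0" using assms by simp
  show ?thesis
  proof (cases "A \<le> 0")
    case True
    hence a: "A/(n+1) \<le> 0" using np by (simp add: divide_nonpos_pos)
    have "t = clip 0 k (A - n*t) \<longleftrightarrow> t = 0"
    proof
      assume h: "t = clip 0 k (A - n*t)"
      hence "t \<ge> 0" using assms unfolding clip_def by auto
      hence "n*t \<ge> 0" using assms by simp
      hence "A - n*t \<le> 0" using True by linarith
      thus "t = 0" using h assms unfolding clip_def by auto
    next
      assume "t = 0" thus "t = clip 0 k (A - n*t)" using True assms unfolding clip_def by auto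
    qed
    moreover have "clip 0 k (A/(n+1)) = 0" using a assms unfolding clip_def by auto
    ultimately show ?thesis by simp
  next
    case F1: False
    show ?thesis
    proof (cases "A \<ge> (n+1)*k")
      case True
      hence a: "A/(n+1) \<ge> k" using np by (simp add: field_simps)
      have "t = clip 0 k (A - n*t) \<longleftrightarrow> t = k"
      proof
        assume h: "t = clip 0 k (A - n*t)"
        hence "t \<le> k" using assms unfolding clip_def by auto
        hence "n*t \<le> n*k" using assms by (simp add: mult_left_mono)
        hence "A - n*t \<ge> k" using True by (simp add: algebra_simps)
        thus "t = k" using h assms unfolding clip_def by auto
      next
        assume "t = k"
        moreover have "A - n*k \<ge> k" using True by (simp add: algebra_simps)
        ultimately show "t = clip 0 k (A - n*t)" using assms unfolding clip_def by auto
      qed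
      moreover have "clip 0 k (A/(n+1)) = k" using a assms unfolding clip_def by auto
      ultimately show ?thesis by simp
    next
      case F2: False
      have a0: "A/(n+1) > 0" using F1 np by simp
      have a1: "A/(n+1) < k" using F2 np by (simp add: field_simps)
      have cl: "clip 0 k (A/(n+1)) = A/(n+1)" using a0 a1 unfolding clip_def by auto
      have "t = clip 0 k (A - n*t) \<longleftrightarrow> t = A/(n+1)"
      proof
        assume h: "t = clip 0 k (A - n*t)"
        have t0: "0 \<le> t" "t \<le> k" using h assms unfolding clip_def by auto
        show "t = A/(n+1)"
        proof (cases "A - n*t \<le> 0")
          case True
          hence "t = 0" using h assms unfolding clip_def by auto
          thus ?thesis using True F1 by simp
        next
          case G: False
          show ?thesis
          proof (cases "A - n*t \<ge> k")
            case True
            hence "t = k" using h assms unfolding clip_def by auto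
            hence "A \<ge> (n+1)*k" using True by (simp add: algebra_simps)
            thus ?thesis using F2 by simp
          next
            case False
            hence "t = A - n*t" using G h unfolding clip_def by auto
            hence "(n+1)*t = A" by (simp add: algebra_simps)
            thus ?thesis using np by (simp add: field_simps)
          qed
        qed
      next
        assume h: "t = A/(n+1)"
        hence "A - n*t = A/(n+1)" using np by (simp add: field_simps)
        thus "t = clip 0 k (A - n*t)" using h cl by simp
      qed
      thus ?thesis using cl by simp
    qed
  qed
qed

theorem proposition2:
  fixes \<alpha> \<beta> c k f :: real and M N :: nat and x fw :: "nat \<Rightarrow> real"
  assumes "M \<ge> 1" and "N \<ge> 2" and "\<alpha> > 0" and "\<beta> > 0" and "c > 0" and "k > 0"
    and "\<forall>i<M. x i \<ge> 0"
    and "\<forall>j<N. fw j = f"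
  shows "(\<exists>y. spot_NE \<alpha> \<beta> c k M N x fw y) \<and>
    (\<forall>y. spot_NE \<alpha> \<beta> c k M N x fw y \<longleftrightarrow>
      (\<forall>j<N. y j = clip 0 k ((1 / (real N + 1)) * ((\<alpha> - c) / \<beta> + f - (\<Sum>i<M. x i)))))"
proof -
  define X where "X = (\<Sum>i<M. x i)"
  define A where "A = (\<alpha> - c) / \<beta> + f - X"
  define ts where "ts = clip 0 k (A / (real N + 1))"
  have b: "\<beta> > 0" and k: "k > 0" using assms by auto
  have tgoal: "clip 0 k ((1 / (real N + 1)) * ((\<alpha> - c) / \<beta> + f - (\<Sum>i<M. x i))) = ts"
    unfolding ts_def A_def X_def by simp
  have NE_char: "spot_NE \<alpha> \<beta> c k M N x fw y \<longleftrightarrow>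
      (\<forall>j<N. y j = clip 0 k (A - (\<Sum>j'<N. y j')))" for y
  proof -
    define S where "S = (\<Sum>j'<N. y j')"
    have per: "(0 \<le> y j \<and> y j \<le> k \<and> (\<forall>z. 0 \<le> z \<and> z \<le> k \<longrightarrow>
        follower_payoff \<alpha> \<beta> c M N x fw (y(j := z)) j \<le> follower_payoff \<alpha> \<beta> c M N x fw y j))
      \<longleftrightarrow> y j = clip 0 k (A - S)" if j: "j < N" for j
    proof -
      define R where "R = \<alpha> - \<beta> * (X + S - y j)"
      have fj: "fw j = f" using assms j by simp
      have pz: "follower_payoff \<alpha> \<beta> c M N x fw (y(j := z)) j = (R - \<beta>*z)*(z-f) - c*z" for z
      proof -
        have e: "(\<Sum>j'<N. (y(j := z)) j') = S - y j + z" using sum_upd[OF j, of y z] S_def by simp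
        show ?thesis unfolding follower_payoff_def R_def e fj X_def[symmetric]
          by (simp add: algebra_simps)
      qed
      have py: "follower_payoff \<alpha> \<beta> c M N x fw y j = (R - \<beta>*y j)*(y j-f) - c*y j"
        unfolding follower_payoff_def R_def fj X_def[symmetric] S_def[symmetric]
        by (simp add: algebra_simps)
      have D: "R + \<beta>*f - c - 2*\<beta>*y j = \<beta> * (A - S - y j)"
        unfolding R_def A_def using b by (simp add: algebra_simps diff_divide_distrib)
      have sg1: "(\<beta> * (A - S - y j) \<ge> 0) \<longleftrightarrow> y j \<le> A - S"
        using b by (simp add: zero_le_mult_iff)
      have sg2: "(\<beta> * (A - S - y j) \<le> 0) \<longleftrightarrow> y j \<ge> A - S"
        using b by (simp add: mult_le_0_iff)
      show ?thesis
      proof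
        assume h: "0 \<le> y j \<and> y j \<le> k \<and> (\<forall>z. 0 \<le> z \<and> z \<le> k \<longrightarrow>
          follower_payoff \<alpha> \<beta> c M N x fw (y(j := z)) j \<le> follower_payoff \<alpha> \<beta> c M N x fw y j)"
        hence "(y j > 0 \<longrightarrow> R + \<beta>*f - c - 2*\<beta>*y j \<ge> 0) \<and> (y j < k \<longrightarrow> R + \<beta>*f - c - 2*\<beta>*y j \<le> 0)"
          using quad_max[OF b, of "y j" k R f c] by (simp add: pz py)
        thus "y j = clip 0 k (A - S)" using h clip_char[OF k, of "y j" "A - S"] D sg1 sg2 by auto
      next
        assume h: "y j = clip 0 k (A - S)"
        hence h2: "0 \<le> y j \<and> y j \<le> k \<and> (y j > 0 \<longrightarrow> y j \<le> A - S) \<and> (y j < k \<longrightarrow> y j \<ge> A - S)"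
          using clip_char[OF k, of "y j" "A - S"] by simp
        hence "(y j > 0 \<longrightarrow> R + \<beta>*f - c - 2*\<beta>*y j \<ge> 0) \<and> (y j < k \<longrightarrow> R + \<beta>*f - c - 2*\<beta>*y j \<le> 0)"
          using D sg1 sg2 by auto
        hence "\<forall>z. 0 \<le> z \<and> z \<le> k \<longrightarrow> (R - \<beta>*z)*(z-f) - c*z \<le> (R - \<beta>*y j)*(y j-f) - c*y j"
          using quad_max[OF b, of "y j" k R f c] h2 by simp
        thus "0 \<le> y j \<and> y j \<le> k \<and> (\<forall>z. 0 \<le> z \<and> z \<le> k \<longrightarrow>
          follower_payoff \<alpha> \<beta> c M N x fw (y(j := z)) j \<le> follower_payoff \<alpha> \<beta> c M N x fw y j)"
          using h2 by (simp add: pz py)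
      qed
    qed
    have "spot_NE \<alpha> \<beta> c k M N x fw y \<longleftrightarrow> (\<forall>j<N. 0 \<le> y j \<and> y j \<le> k \<and> (\<forall>z. 0 \<le> z \<and> z \<le> k \<longrightarrow>
        follower_payoff \<alpha> \<beta> c M N x fw (y(j := z)) j \<le> follower_payoff \<alpha> \<beta> c M N x fw y j))"
      unfolding spot_NE_def by blast
    also have "\<dots> \<longleftrightarrow> (\<forall>j<N. y j = clip 0 k (A - S))" using per by blast
    finally show ?thesis unfolding S_def .
  qed
  have main: "(\<forall>j<N. y j = clip 0 k (A - (\<Sum>j'<N. y j'))) \<longleftrightarrow> (\<forall>j<N. y j = ts)" for y
  proof
    assume h: "\<forall>j<N. y j = clip 0 k (A - (\<Sum>j'<N. y j'))"
    define t where "t = clip 0 k (A - (\<Sum>j'<N. y j'))"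
    have "(\<Sum>j'<N. y j') = (\<Sum>j'<N. t)"
    proof (rule sum.cong)
      fix j' assume "j' \<in> {..<N}"
      then show "y j' = t" using h unfolding t_def[symmetric] by blast
    qed simp
    hence S: "(\<Sum>j'<N. y j') = real N * t" by simp
    have "t = clip 0 k (A - real N * t)" unfolding t_def[symmetric] S[symmetric] ..
    hence "t = ts" using fix_char[OF k of_nat_0_le_iff, of t A] unfolding ts_def by blast
    thus "\<forall>j<N. y j = ts" using h unfolding t_def[symmetric] by simp
  next
    assume h: "\<forall>j<N. y j = ts"
    have "(\<Sum>j'<N. y j') = (\<Sum>j'<N. ts)"
    proof (rule sum.cong)
      fix j' assume "j' \<in> {..<N}"
      then show "y j' = ts" using h by blast
    qed simp
    hence S: "(\<Sum>j'<N. y j') = real N * ts" by simp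
    have "ts = clip 0 k (A - real N * ts)" using fix_char[OF k of_nat_0_le_iff, of ts A] unfolding ts_def by blast
    thus "\<forall>j<N. y j = clip 0 k (A - (\<Sum>j'<N. y j'))" using h unfolding S by simp
  qed
  have allc: "spot_NE \<alpha> \<beta> c k M N x fw y \<longleftrightarrow> (\<forall>j<N. y j = ts)" for y
    using NE_char main by blast
  show ?thesis unfolding tgoal using allc[of "\<lambda>_. ts"] allc by blast
qed

end
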